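(* Let $0<q<1$, let $k$ be a nonnegative integer, $n$ a positive integer, and $x\in[0,1]$. Then $$\left(\frac{n-k}{n}\right)B_{k,n}(x,q)+\left(\frac{k+1}{n}\right)B_{k+1,n}(x,q)=B_{k,n-1}(x,q)+(1-q)[x]_q[1-x]_q\,B_{k,n-1}(x,q).$$
   Context: Let $q$ be a real number with $0<q<1$. For real $x$, the $q$-number is $[x]_q=\frac{1-q^x}{1-q}$. For a nonnegative integer $k$ and $x\in[0,1]$, the modified $q$-Bernstein polynomials $B_{k,n}(x,q)$, $n=0,1,2,\dots$, are defined by the generating function $$\frac{t^k e^{[1-x]_q t}[x]_q^k}{k!}=\sum_{n=0}^\infty B_{k,n}(x,q)\frac{t^n}{n!}.$$ *)

theory Defs
  imports Complex_Main "HOL-Computational_Algebra.Formal_Power_Series"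
begin

definition qnum :: "real \<Rightarrow> real \<Rightarrow> real" where
  "qnum q x = (1 - q powr x) / (1 - q)"

definition qBern_gf :: "nat \<Rightarrow> real \<Rightarrow> real \<Rightarrow> real fps" where
  "qBern_gf k x q = fps_const (qnum q x ^ k / fact k) * fps_X ^ k * fps_exp (qnum q (1 - x))"

definition qBern :: "nat \<Rightarrow> nat \<Rightarrow> real \<Rightarrow> real \<Rightarrow> real" where
  "qBern k n x q = fact n * fps_nth (qBern_gf k x q) n"

end

theory Submission
  imports Defs
begin

lemma qBern_closed:
  "qBern k n x q = real (n choose k) * qnum q x ^ k * qnum q (1 - x) ^ (n - k)"
proof (cases "k \<le> n")
  case True
  have "qBern k n x q = fact n * (qnum q x ^ k / fact k * (qnum q (1 - x) ^ (n - k) / fact (n - k)))"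
    unfolding qBern_def qBern_gf_def using True
    by (simp add: mult.assoc fps_X_power_mult_nth)
  also have "\<dots> = (fact n / (fact k * fact (n - k))) * qnum q x ^ k * qnum q (1 - x) ^ (n - k)"
    by (simp add: field_simps)
  finally show ?thesis using binomial_fact[OF True, where 'a=real] by simp
next
  case False
  then show ?thesis unfolding qBern_def qBern_gf_def
    by (simp add: mult.assoc fps_X_power_mult_nth)
qed

lemma qalg: fixes u v q :: real assumes nz: "1 - q \<noteq> 0" and uv: "u*v = q"
 shows "(1 - u) / (1 - q) + (1 - v) / (1 - q) = 1 + (1 - q) * ((1 - u) / (1 - q)) * ((1 - v) / (1 - q))"
proof -
  have r: "(1 - q) * ((1 - u) / (1 - q)) * ((1 - v) / (1 - q)) = (1 - u - v + q)/(1-q)"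
  proof -
    have "(1 - q) * ((1 - u) / (1 - q)) = 1 - u" using nz by simp
    hence "(1 - q) * ((1 - u) / (1 - q)) * ((1 - v) / (1 - q)) = (1-u)*((1 - v) / (1 - q))" by simp
    also have "\<dots> = ((1-u)*(1-v))/(1-q)" by simp
    also have "(1-u)*(1-v) = 1 - u - v + q" using uv by (simp add: algebra_simps)
    finally show ?thesis .
  qed
  have a: "1 + (1 - u - v + q)/(1-q) = (2 - u - v)/(1-q)" using nz by (simp add: field_simps)
  have b: "(1 - u) / (1 - q) + (1 - v) / (1 - q) = (2-u-v)/(1-q)" by (simp add: add_divide_distrib[symmetric])
  show ?thesis unfolding r a b ..
qed

lemma qsum:
  assumes "0 < q" "q < 1"
  shows "qnum q x + qnum q (1 - x) = 1 + (1 - q) * qnum q x * qnum q (1 - x)"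
proof -
  have e: "q powr x * q powr (1 - x) = q" using assms
    by (simp add: powr_add[symmetric])
  have nz: "1 - q \<noteq> 0" using assms by simp
  define u where "u = q powr x"
  define v where "v = q powr (1 - x)"
  have uv: "u * v = q" using e unfolding u_def v_def .
  have "(1 - u) / (1 - q) + (1 - v) / (1 - q) = 1 + (1 - q) * ((1 - u) / (1 - q)) * ((1 - v) / (1 - q))"
    using qalg[OF nz uv] .
  then show ?thesis unfolding qnum_def u_def v_def .
qed

lemma aux_div: fixes r s C D A B :: real
  assumes "r \<noteq> 0" "s * C = r * D"
  shows "(s / r) * (C * A * B) = D * A * B"
proof -
  have "(s / r) * C = D" using assms by (metis nonzero_mult_div_cancel_left times_divide_eq_left)
  then show ?thesis by (metis mult.assoc)
qed

theorem theorem4: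
  fixes q x :: real and k n :: nat
  assumes "0 < q" "q < 1" "0 < n" "0 \<le> x" "x \<le> 1"
  shows "((real n - real k) / real n) * qBern k n x q
           + ((real k + 1) / real n) * qBern (k + 1) n x q
         = qBern k (n - 1) x q + (1 - q) * qnum q x * qnum q (1 - x) * qBern k (n - 1) x q"
proof -
  define a where "a = qnum q x"
  define b where "b = qnum q (1 - x)"
  have ab: "a + b = 1 + (1 - q) * a * b" unfolding a_def b_def by (rule qsum[OF assms(1,2)])
  obtain m where m: "n = Suc m" using assms(3) by (cases n) auto
  show ?thesis
  proof (cases "k \<le> m")
    case True
    have c1: "real (Suc m - k) * real (Suc m choose k) = real (Suc m) * real (m choose k)"
    proof -
      have "(Suc m - k) * (Suc m choose k) = Suc m * (m choose k)"
        using binomial_absorb_comp[of "Suc m" k] by simp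
      then show ?thesis by (simp only: of_nat_mult[symmetric])
    qed
    have c2: "real (Suc k) * real (Suc m choose Suc k) = real (Suc m) * real (m choose k)"
    proof -
      have "Suc k * (Suc m choose Suc k) = Suc m * (m choose k)"
        using binomial_absorption[of k "Suc m"] by simp
      then show ?thesis by (simp only: of_nat_mult[symmetric])
    qed
    have d1: "real (Suc m) - real k = real (Suc m - k)" using True by (simp only: of_nat_diff)
    have e1: "Suc m - k = Suc (m - k)" using True by simp
    have e2: "Suc m - Suc k = m - k" by simp
    have L1: "((real n - real k) / real n) * qBern k n x q = real (m choose k) * a^k * b^(m-k) * b"
    proof -
      have F1: "(real n - real k) * real (n choose k) = real n * real (m choose k)"
        unfolding m d1 by (rule c1)
      have F2: "b ^ (n - k) = b^(m-k) * b" unfolding m e1 by (rule power_Suc2)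
      have F3: "real n \<noteq> 0" using assms by simp
      show ?thesis unfolding qBern_closed a_def[symmetric] b_def[symmetric]
        unfolding aux_div[OF F3 F1] F2 by (simp only: mult.assoc mult.left_commute mult.commute)
    qed
    have L2: "((real k + 1) / real n) * qBern (k+1) n x q = real (m choose k) * a^k * b^(m-k) * a"
    proof -
      have F1: "(real k + 1) * real (n choose (k+1)) = real n * real (m choose k)"
      proof -
        have "real k + 1 = real (Suc k)" "k + 1 = Suc k" by simp_all
        then show ?thesis unfolding m using c2 by (simp only:)
      qed
      have F2: "b ^ (n - (k+1)) = b^(m-k)" unfolding m using e2 by simp
      have F3: "real n \<noteq> 0" using assms by simp
      show ?thesis unfolding qBern_closed a_def[symmetric] b_def[symmetric]
        unfolding aux_div[OF F3 F1] F2 by (simp only: Suc_eq_plus1[symmetric] power_Suc mult.assoc mult.left_commute mult.commute)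
    qed
    have "real (m choose k) * a^k * b^(m-k) * b + real (m choose k) * a^k * b^(m-k) * a
        = real (m choose k) * a^k * b^(m-k) * (a + b)" by (simp add: algebra_simps)
    also have "\<dots> = real (m choose k) * a^k * b^(m-k) + (1 - q) * a * b * (real (m choose k) * a^k * b^(m-k))"
      unfolding ab by (simp add: algebra_simps)
    finally have calc: "real (m choose k) * a^k * b^(m-k) * b + real (m choose k) * a^k * b^(m-k) * a
       = real (m choose k) * a^k * b^(m-k) + (1 - q) * a * b * (real (m choose k) * a^k * b^(m-k))" .
    have Q: "qBern k (n - 1) x q = real (m choose k) * a^k * b^(m-k)"
      unfolding qBern_closed a_def b_def m by simp
    show ?thesis unfolding L1 L2 Q a_def[symmetric] b_def[symmetric] by (rule calc)
  next
    case False
    then have "k \<ge> n" using m by simp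
    have z1: "m choose k = 0" "Suc m choose (k+1) = 0" using False by simp_all
    have z2: "(real (Suc m) - real k) * real (Suc m choose k) = 0"
    proof (cases "k = Suc m")
      case True then show ?thesis by simp
    next
      case False then have "Suc m choose k = 0" using \<open>k \<ge> n\<close> m by simp
      then show ?thesis by simp
    qed
    show ?thesis unfolding qBern_closed m diff_Suc_1 z1 using z2
      by (simp del: binomial_Suc_Suc) blast
  qed
qed

end
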